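(* Let $(X_n)_{n\ge1}$ be i.i.d. nonnegative random variables with $\mathbb{P}(X_1=0)<1$ and $\mathbb{E}[X_1]<\infty$, let $T_0=0$, $T_n=X_1+\dots+X_n$, $N_t=\sum_{j\ge1}\mathbf{1}_{T_j\le t}$ and let $A_t=t-T_{N_t}$ be the age of this renewal process. Let $(C_i)_{i\ge1}$ be i.i.d. copies of a random variable $C$ with $\mathbb{P}(C>0)=1$ and $\mathbb{E}[C^2]<\infty$, $D_0=0$, $D_n=C_1+\dots+C_n$, and $\underline{B}(s)=\sup\{n\ge0: D_n\le s\}$ for $s\ge 0$. Then $\underline{B}(A_t)/\sqrt{t}$ converges in probability to $0$ as $t\to\infty$. *)

theory Defs
  imports "HOL-Probability.Probability"
begin

definition partial_sum :: "(nat \<Rightarrow> 'a \<Rightarrow> real) \<Rightarrow> nat \<Rightarrow> 'a \<Rightarrow> real" where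
  "partial_sum Y n \<omega> = (\<Sum>j\<in>{1..n}. Y j \<omega>)"

definition renewal_count :: "(nat \<Rightarrow> 'a \<Rightarrow> real) \<Rightarrow> real \<Rightarrow> 'a \<Rightarrow> nat" where
  "renewal_count X t \<omega> = card {j. 1 \<le> j \<and> partial_sum X j \<omega> \<le> t}"

definition renewal_age :: "(nat \<Rightarrow> 'a \<Rightarrow> real) \<Rightarrow> real \<Rightarrow> 'a \<Rightarrow> real" where
  "renewal_age X t \<omega> = t - partial_sum X (renewal_count X t \<omega>) \<omega>"

definition lower_count :: "(nat \<Rightarrow> 'a \<Rightarrow> real) \<Rightarrow> real \<Rightarrow> 'a \<Rightarrow> nat" where
  "lower_count C s \<omega> = Sup {n. partial_sum C n \<omega> \<le> s}"

end

theory Submission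
  imports Defs
begin


lemma partial_sum_Suc: "partial_sum Y (Suc n) w = partial_sum Y n w + Y (Suc n) w"
  unfolding partial_sum_def by (simp add: add.commute)

lemma partial_sum_0[simp]: "partial_sum Y 0 w = 0"
  unfolding partial_sum_def by simp

lemma partial_sum_mono:
  assumes "\<And>j. j \<ge> 1 \<Longrightarrow> Y j w \<ge> 0" "n \<le> n'"
  shows "partial_sum Y n w \<le> partial_sum Y n' w"
  unfolding partial_sum_def using assms by (intro sum_mono2) auto

lemma partial_sum_meas:
  assumes "\<And>n. n \<ge> 1 \<Longrightarrow> Y n \<in> borel_measurable M"
  shows "partial_sum Y n \<in> borel_measurable M"
proof -
  have "(\<lambda>w. \<Sum>j\<in>{1..n}. Y j w) \<in> borel_measurable M"
    using assms by (intro borel_measurable_sum) auto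
  then show ?thesis unfolding partial_sum_def[abs_def] .
qed

lemma (in prob_space) same_prob:
  assumes "distr M borel (Y n) = distr M borel (Y 1)" "Y n \<in> borel_measurable M" "Y 1 \<in> borel_measurable M"
    "B \<in> sets borel"
  shows "prob {w\<in>space M. Y n w \<in> B} = prob {w\<in>space M. Y 1 w \<in> B}"
proof -
  have "prob {w\<in>space M. Y n w \<in> B} = measure (distr M borel (Y n)) B"
    using assms by (subst measure_distr) (auto intro!: arg_cong[where f=prob])
  also have "\<dots> = measure (distr M borel (Y 1)) B" using assms by simp
  also have "\<dots> = prob {w\<in>space M. Y 1 w \<in> B}"
    using assms by (subst measure_distr) (auto intro!: arg_cong[where f=prob])
  finally show ?thesis .
qed

lemma (in prob_space) same_integral:
  fixes g :: "real \<Rightarrow> real"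
  assumes "distr M borel (Y n) = distr M borel (Y 1)" "Y n \<in> borel_measurable M" "Y 1 \<in> borel_measurable M"
    "g \<in> borel_measurable borel"
  shows "expectation (\<lambda>w. g (Y n w)) = expectation (\<lambda>w. g (Y 1 w))"
proof -
  have "expectation (\<lambda>w. g (Y n w)) = integral\<^sup>L (distr M borel (Y n)) g"
    using assms by (subst integral_distr) auto
  also have "\<dots> = integral\<^sup>L (distr M borel (Y 1)) g" using assms by simp
  also have "\<dots> = expectation (\<lambda>w. g (Y 1 w))"
    using assms by (subst integral_distr) auto
  finally show ?thesis .
qed

lemma (in prob_space) indep_ps:
  assumes "indep_vars (\<lambda>_. borel) Y {1..}"
  shows "indep_var borel (Y (Suc n)) borel (partial_sum Y n)"
proof -
  have "indep_vars (\<lambda>_. borel) Y (insert (Suc n) {1..n})"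
    using assms by (rule indep_vars_subset) auto
  from indep_vars_sum[OF _ _ this] show ?thesis
    unfolding partial_sum_def[abs_def] by simp
qed

lemma measure_le_sets:
  assumes "finite_measure M" "S \<subseteq> S'" "S' \<in> sets M"
  shows "measure M S \<le> measure M S'"
  using assms finite_measure.finite_measure_mono by blast



lemma (in prob_space) exp_bound:
  fixes Y :: "nat \<Rightarrow> 'a \<Rightarrow> real"
  assumes meas: "\<And>n. n \<ge> 1 \<Longrightarrow> Y n \<in> borel_measurable M"
    and indep: "indep_vars (\<lambda>_. borel) Y {1..}"
    and ident: "\<And>n. n \<ge> 1 \<Longrightarrow> distr M borel (Y n) = distr M borel (Y 1)"
    and nonneg: "\<And>n. n \<ge> 1 \<Longrightarrow> AE w in M. Y n w \<ge> 0"
  shows "prob {w\<in>space M. partial_sum Y m w \<le> s} \<le> exp s * (expectation (\<lambda>w. exp (- Y 1 w)))^m"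
proof -
  define Z where "Z i w = exp (- Y i w)" for i w
  have Zm: "Z i \<in> borel_measurable M" if "i \<ge> 1" for i
    unfolding Z_def[abs_def] using meas[OF that] by measurable
  have Zint: "integrable M (Z i)" if "i \<ge> 1" for i
  proof (rule integrable_const_bound[where B=1])
    show "Z i \<in> borel_measurable M" by (rule Zm[OF that])
    show "AE x in M. norm (Z i x) \<le> 1"
      using nonneg[OF that] by eventually_elim (simp add: Z_def)
  qed
  have indZ: "indep_vars (\<lambda>_. borel) Z {1..m}"
  proof -
    have "indep_vars (\<lambda>_. borel) (\<lambda>i w. exp (- Y i w)) {1..}"
      by (rule indep_vars_compose2[OF indep]) auto
    then show ?thesis unfolding Z_def[abs_def] by (rule indep_vars_subset) auto
  qed
  have EZ: "expectation (Z i) = expectation (Z 1)" if "i \<ge> 1" for i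
    unfolding Z_def using same_integral[OF ident[OF that] meas[OF that] meas, of "\<lambda>x. exp (-x)"] by simp
  have prodeq: "expectation (\<lambda>w. \<Prod>i\<in>{1..m}. Z i w) = (\<Prod>i\<in>{1..m}. expectation (Z i))"
    using indZ Zint by (intro indep_vars_lebesgue_integral) auto
  also have "\<dots> = (\<Prod>i\<in>{1..m}. expectation (Z 1))"
    by (rule prod.cong[OF refl], rule EZ) simp
  also have "\<dots> = expectation (Z 1) ^ m" by simp
  finally have prodeq': "expectation (\<lambda>w. \<Prod>i\<in>{1..m}. Z i w) = expectation (Z 1) ^ m" .
  have intP: "integrable M (\<lambda>w. \<Prod>i\<in>{1..m}. Z i w)"
    using indZ Zint by (intro indep_vars_integrable) auto
  have PS: "exp (- partial_sum Y m w) = (\<Prod>i\<in>{1..m}. Z i w)" for w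
    unfolding partial_sum_def Z_def by (simp add: exp_sum[symmetric] sum_negf)
  have iff: "partial_sum Y m w \<le> s \<longleftrightarrow> exp (-s) \<le> (\<Prod>i\<in>{1..m}. Z i w)" for w
    unfolding PS[symmetric] by simp
  have "{w\<in>space M. partial_sum Y m w \<le> s} = {w\<in>space M. (\<Prod>i\<in>{1..m}. Z i w) \<ge> exp (-s)}"
    using iff by blast
  also have "prob \<dots> \<le> expectation (\<lambda>w. \<Prod>i\<in>{1..m}. Z i w) / exp (-s)"
    by (rule integral_Markov_inequality_measure[OF intP])
       (auto simp: Z_def intro!: prod_nonneg)
  also have "\<dots> = exp s * expectation (Z 1) ^ m"
    using prodeq' by (simp add: exp_minus field_simps)
  finally show ?thesis by (simp add: Z_def[abs_def])
qed



lemma (in prob_space) pos_level: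
  fixes Y :: "'a \<Rightarrow> real"
  assumes Ym[measurable]: "Y \<in> borel_measurable M"
    and pos: "prob {w\<in>space M. Y w > 0} > 0"
  shows "\<exists>h>0. prob {w\<in>space M. Y w > h} > 0"
proof (rule ccontr)
  assume "\<not> ?thesis"
  then have z: "prob {w\<in>space M. Y w > 1 / Suc n} = 0" for n
    using measure_nonneg[of M] by (metis divide_pos_pos less_eq_real_def of_nat_0_less_iff zero_less_Suc zero_less_one)
  have "{w\<in>space M. Y w > 0} = (\<Union>n. {w\<in>space M. Y w > 1 / Suc n})"
  proof safe
    fix w assume "w \<in> space M" "Y w > 0"
    then obtain n where "inverse (real (Suc n)) < Y w" using reals_Archimedean[of "Y w"]
      by blast
    then have "1 / Suc n < Y w" by (simp add: inverse_eq_divide)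
    then show "w \<in> (\<Union>n. {w\<in>space M. Y w > 1 / Suc n})" using \<open>w \<in> space M\<close> by auto
  next
    fix w n assume "w \<in> space M" "Y w > 1 / Suc n"
    then show "Y w > 0" by (smt (verit) divide_pos_pos of_nat_0_less_iff zero_less_Suc)
  qed
  also have "prob \<dots> \<le> (\<Sum>n. prob {w\<in>space M. Y w > 1 / Suc n})"
    apply (rule finite_measure_subadditive_countably)
     apply auto[1]
    apply (simp only: z summable_zero)
    done
  also have "\<dots> = 0" by (simp only: z) simp
  finally show False using pos by simp
qed

lemma (in prob_space) exp_moment_lt1:
  fixes Y :: "'a \<Rightarrow> real"
  assumes Ym[measurable]: "Y \<in> borel_measurable M"
    and nonneg: "AE w in M. Y w \<ge> 0"
    and pos: "prob {w\<in>space M. Y w > 0} > 0"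
  shows "expectation (\<lambda>w. exp (- Y w)) < 1"
proof -
  obtain h where h: "h > 0" "prob {w\<in>space M. Y w > h} > 0" using pos_level[OF Ym pos] by auto
  define A where "A = {w\<in>space M. Y w > h}"
  have A[measurable]: "A \<in> sets M" unfolding A_def by measurable
  define c where "c = 1 - exp (-h)"
  have c: "c > 0" using h unfolding c_def by simp
  have int1: "integrable M (\<lambda>w. exp (- Y w))"
    by (rule integrable_const_bound[where B=1]) (use nonneg in \<open>auto elim!: eventually_mono\<close>)
  have "expectation (\<lambda>w. exp (- Y w)) \<le> expectation (\<lambda>w. 1 - c * indicator A w)"
  proof (rule integral_mono_AE[OF int1])
    show "integrable M (\<lambda>w. 1 - c * indicator A w)"
      by (intro Bochner_Integration.integrable_diff integrable_mult_right integrable_real_indicator) (auto simp: less_top[symmetric])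
    show "AE w in M. exp (- Y w) \<le> 1 - c * indicator A w"
      using nonneg
    proof eventually_elim
      case (elim w)
      show ?case
      proof (cases "w \<in> A")
        case True then have "Y w > h" unfolding A_def by auto
        then show ?thesis using True by (simp add: c_def)
      next
        case False then show ?thesis using elim by simp
      qed
    qed
  qed
  also have "\<dots> = expectation (\<lambda>_. 1) - expectation (\<lambda>w. c * indicator A w)"
    by (rule Bochner_Integration.integral_diff)
       (auto intro!: integrable_real_indicator simp: less_top[symmetric])
  also have "\<dots> = 1 - c * prob A"
    using sets.sets_into_space[OF A] by (simp add: prob_space Int_absorb2)
  also have "\<dots> < 1" using c h unfolding A_def by simp
  finally show ?thesis .
qed



lemma (in prob_space) AE_all_nonneg:
  fixes Y :: "nat \<Rightarrow> 'a \<Rightarrow> real"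
  assumes nonneg: "\<And>n. n \<ge> 1 \<Longrightarrow> AE w in M. Y n w \<ge> 0"
  shows "AE w in M. \<forall>j. j \<ge> 1 \<longrightarrow> Y j w \<ge> 0"
proof -
  have "\<forall>j. AE w in M. j \<ge> 1 \<longrightarrow> Y j w \<ge> 0"
  proof
    fix j show "AE w in M. j \<ge> 1 \<longrightarrow> Y j w \<ge> 0"
      by (cases "j \<ge> 1") (use nonneg in auto)
  qed
  then show ?thesis by (simp add: AE_all_countable)
qed

lemma (in prob_space) renewal_bound:
  fixes Y :: "nat \<Rightarrow> 'a \<Rightarrow> real"
  assumes meas: "\<And>n. n \<ge> 1 \<Longrightarrow> Y n \<in> borel_measurable M"
    and indep: "indep_vars (\<lambda>_. borel) Y {1..}"
    and ident: "\<And>n. n \<ge> 1 \<Longrightarrow> distr M borel (Y n) = distr M borel (Y 1)"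
    and nonneg: "\<And>n. n \<ge> 1 \<Longrightarrow> AE w in M. Y n w \<ge> 0"
    and r1: "prob {w\<in>space M. Y 1 w \<le> h} < 1"
  shows "(\<Sum>n<N. prob {w\<in>space M. partial_sum Y n w \<in> {x<..x+h}}) \<le> 1 / (1 - prob {w\<in>space M. Y 1 w \<le> h})"
proof -
  define r where "r = prob {w\<in>space M. Y 1 w \<le> h}"
  define I where "I = {x<..x+h}"
  have Tm[measurable]: "partial_sum Y n \<in> borel_measurable M" for n
    by (rule partial_sum_meas) (rule meas)
  have Ym[measurable]: "Y (Suc n) \<in> borel_measurable M" for n using meas by simp
  have Y1m[measurable]: "Y 1 \<in> borel_measurable M" using meas by simp
  define E where "E n = {w\<in>space M. partial_sum Y n w \<in> I}" for n
  define F where "F n = {w\<in>space M. partial_sum Y n w \<in> I \<and> Y (Suc n) w > h}" for n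
  define E' where "E' n = {w\<in>space M. partial_sum Y n w \<in> I \<and> Y (Suc n) w \<le> h}" for n
  define G where "G = {w\<in>space M. \<forall>j. j \<ge> 1 \<longrightarrow> Y j w \<ge> 0}"
  have [measurable]: "E n \<in> sets M" "F n \<in> sets M" "E' n \<in> sets M" for n
    unfolding E_def F_def E'_def I_def by measurable
  have Gm[measurable]: "G \<in> sets M"
  proof -
    have "G = space M \<inter> (\<Inter>j\<in>{1..}. {w\<in>space M. Y j w \<ge> 0})" unfolding G_def by auto
    also have "\<dots> \<in> sets M" using meas by (intro sets.Int sets.countable_INT') auto
    finally show ?thesis .
  qed
  have AEG: "AE w in M. w \<in> G"
    using AE_all_nonneg[OF nonneg] unfolding G_def by (auto elim!: eventually_mono)
  have split: "prob (E n) = prob (F n) + prob (E' n)" for n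
  proof -
    have "E n = F n \<union> E' n" "F n \<inter> E' n = {}" unfolding E_def F_def E'_def by auto
    then show ?thesis by (simp add: finite_measure_Union)
  qed
  have E'eq: "prob (E' n) = r * prob (E n)" for n
  proof -
    have "prob ((\<lambda>w. (Y (Suc n) w, partial_sum Y n w)) -` ({..h} \<times> I) \<inter> space M) =
      prob (Y (Suc n) -` {..h} \<inter> space M) * prob (partial_sum Y n -` I \<inter> space M)"
      by (rule indep_varD[OF indep_ps[OF indep]]) (auto simp: I_def)
    moreover have "prob (Y (Suc n) -` {..h} \<inter> space M) = r"
      using same_prob[OF ident[of "Suc n"] Ym Y1m, of "{..h}"] unfolding r_def
      by (simp add: vimage_def Int_def conj_commute)
    ultimately show ?thesis unfolding E_def E'_def
      by (simp add: vimage_def Int_def conj_commute mult.commute)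
  qed
  have sumF: "(\<Sum>n<N. prob (F n)) \<le> 1"
  proof -
    have "(\<Sum>n<N. prob (F n)) = (\<Sum>n<N. prob (F n \<inter> G))"
      by (intro sum.cong refl measure_eq_AE) (use AEG in \<open>auto elim!: eventually_mono\<close>)
    also have "\<dots> = prob (\<Union>n\<in>{..<N}. F n \<inter> G)"
    proof (rule measure_finite_Union[symmetric])
      show "disjoint_family_on (\<lambda>n. F n \<inter> G) {..<N}"
        unfolding disjoint_family_on_def
      proof (intro ballI impI)
        have *: False if "n < n'" "w \<in> F n" "w \<in> F n'" "w \<in> G" for n n' w
        proof -
          have nn: "\<And>j. j \<ge> 1 \<Longrightarrow> Y j w \<ge> 0" using that(4) unfolding G_def by auto
          have "partial_sum Y (Suc n) w \<le> partial_sum Y n' w"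
            using partial_sum_mono[of Y w, OF nn] that(1) by auto
          moreover have "partial_sum Y (Suc n) w > x + h"
            using that(2) unfolding F_def I_def partial_sum_Suc by auto
          moreover have "partial_sum Y n' w \<le> x + h"
            using that(3) unfolding F_def I_def by auto
          ultimately show False by simp
        qed
        fix n n' assume "n \<in> {..<N}" "n' \<in> {..<N}" "n \<noteq> n'"
        then show "(F n \<inter> G) \<inter> (F n' \<inter> G) = {}"
          using *[of n n'] *[of n' n] by (cases "n < n'") auto
      qed
    qed (auto simp: emeasure_finite)
    also have "\<dots> \<le> 1" by simp
    finally show ?thesis .
  qed
  define S where "S = (\<Sum>n<N. prob (E n))"
  have "S = (\<Sum>n<N. prob (F n)) + r * S"
  proof -
    have "prob (E n) = prob (F n) + r * prob (E n)" for n using split[of n] E'eq[of n] by simp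
    then have "S = (\<Sum>n<N. prob (F n) + r * prob (E n))" unfolding S_def by (intro sum.cong) auto
    also have "\<dots> = (\<Sum>n<N. prob (F n)) + r * (\<Sum>n<N. prob (E n))"
      by (simp add: sum.distrib sum_distrib_left)
    finally show ?thesis unfolding S_def .
  qed
  then have "S * (1 - r) \<le> 1" using sumF by (simp add: algebra_simps)
  moreover have "1 - r > 0" using r1 unfolding r_def by simp
  ultimately have "S \<le> 1 / (1 - r)" by (simp add: field_simps)
  then show ?thesis unfolding S_def E_def I_def r_def .
qed



lemma count_bound:
  fixes y a h :: real
  assumes h: "h > 0" and a: "a \<ge> 1"
  shows "(\<Sum>k<K. if y > a + real k * h then 1 else (0::real)) \<le> (1/h + 1) * (if y > a then y else 0)"
proof (cases "y > a")
  case False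
  then have "\<And>k. \<not> y > a + real k * h" using h by (smt (verit) mult_nonneg_nonneg of_nat_0_le_iff)
  then show ?thesis using False by simp
next
  case True
  have "(\<Sum>k<K. if y > a + real k * h then 1 else (0::real)) = (\<Sum>k\<in>{k\<in>{..<K}. y > a + real k * h}. 1)"
    by (rule sum.inter_filter[symmetric]) simp
  also have "\<dots> = real (card {k\<in>{..<K}. y > a + real k * h})" by simp
  also have "\<dots> \<le> real (card {..<nat \<lceil>(y - a) / h\<rceil>})"
  proof -
    have "{k\<in>{..<K}. y > a + real k * h} \<subseteq> {..<nat \<lceil>(y - a) / h\<rceil>}"
    proof
      fix k assume "k \<in> {k\<in>{..<K}. y > a + real k * h}"
      then have "real k * h < y - a" by auto
      then have "real k < (y - a) / h" using h by (simp add: field_simps)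
      then have "real k < real_of_int \<lceil>(y - a) / h\<rceil>" by linarith
      then have "int k < \<lceil>(y - a) / h\<rceil>" by (metis of_int_of_nat_eq of_int_less_iff)
      then show "k \<in> {..<nat \<lceil>(y - a) / h\<rceil>}" by (simp add: zless_nat_eq_int_zless)
    qed
    then show ?thesis by (intro of_nat_mono card_mono) auto
  qed
  also have "\<dots> \<le> (y - a) / h + 1"
  proof -
    have "(y - a) / h > 0" using True h by simp
    then show ?thesis by simp
  qed
  also have "\<dots> \<le> (1/h + 1) * y"
  proof -
    have "(y - a) / h \<le> y / h" using h a by (simp add: divide_right_mono)
    then show ?thesis using True a by (simp add: algebra_simps)
  qed
  finally show ?thesis using True by simp
qed

lemma (in prob_space) ksum_bound:
  fixes Y :: "'a \<Rightarrow> real"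
  assumes Ym[measurable]: "Y \<in> borel_measurable M" and Yi: "integrable M Y"
    and h: "h > 0" and a: "a \<ge> 1"
  shows "(\<Sum>k<K. prob {w\<in>space M. Y w > a + real k * h})
     \<le> (1/h + 1) * expectation (\<lambda>w. if Y w > a then Y w else 0)"
proof -
  have ti: "integrable M (\<lambda>w. if Y w > a then Y w else 0)"
    by (rule Bochner_Integration.integrable_bound[OF Yi]) auto
  have "(\<Sum>k<K. prob {w\<in>space M. Y w > a + real k * h})
      = (\<Sum>k<K. expectation (indicator {w\<in>space M. Y w > a + real k * h}))"
    by (intro sum.cong refl) (simp add: Int_absorb2)
  also have "\<dots> = expectation (\<lambda>w. \<Sum>k<K. indicator {w\<in>space M. Y w > a + real k * h} w)"
    by (subst Bochner_Integration.integral_sum) (auto intro!: integrable_real_indicator simp: less_top[symmetric])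
  also have "\<dots> \<le> expectation (\<lambda>w. (1/h + 1) * (if Y w > a then Y w else 0))"
  proof (rule integral_mono)
    show "integrable M (\<lambda>w. \<Sum>k<K. indicator {w\<in>space M. Y w > a + real k * h} w :: real)"
      by (auto intro!: integrable_real_indicator simp: less_top[symmetric])
    show "integrable M (\<lambda>w. (1/h + 1) * (if Y w > a then Y w else 0))"
      using ti by simp
    fix w assume w: "w \<in> space M"
    have "(\<Sum>k<K. indicator {w\<in>space M. Y w > a + real k * h} w :: real)
        = (\<Sum>k<K. if Y w > a + real k * h then 1 else (0::real))"
      using w by (intro sum.cong) (auto simp: indicator_def)
    also have "\<dots> \<le> (1/h + 1) * (if Y w > a then Y w else 0)" by (rule count_bound[OF h a])
    finally show "(\<Sum>k<K. indicator {w\<in>space M. Y w > a + real k * h} w :: real)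
       \<le> (1/h + 1) * (if Y w > a then Y w else 0)" .
  qed
  also have "\<dots> = (1/h + 1) * expectation (\<lambda>w. if Y w > a then Y w else 0)"
    by simp
  finally show ?thesis .
qed

lemma (in prob_space) tail_tendsto:
  fixes Y :: "'a \<Rightarrow> real"
  assumes Ym[measurable]: "Y \<in> borel_measurable M" and Yi: "integrable M Y"
    and c: "c > 0"
  shows "(\<lambda>m. expectation (\<lambda>w. if Y w > c * real m then Y w else 0)) \<longlonglongrightarrow> 0"
proof -
  have "(\<lambda>m. expectation (\<lambda>w. if Y w > c * real m then Y w else 0)) \<longlonglongrightarrow> expectation (\<lambda>w. 0)"
  proof (rule integral_dominated_convergence[where w="\<lambda>w. norm (Y w)"])
    show "integrable M (\<lambda>w. norm (Y w))" using Yi by simp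
    show "AE w in M. (\<lambda>m. if Y w > c * real m then Y w else 0) \<longlonglongrightarrow> 0"
    proof (rule AE_I2)
      fix w
      obtain n where "Y w < c * real n"
        using reals_Archimedean3[OF c] by (metis mult.commute)
      then have "\<forall>m\<ge>n. (if Y w > c * real m then Y w else 0) = 0"
      proof (intro allI impI)
        fix m assume "m \<ge> n"
        then have "c * real n \<le> c * real m" using c by simp
        then show "(if Y w > c * real m then Y w else 0) = 0" using \<open>Y w < c * real n\<close> by simp
      qed
      then show "(\<lambda>m. if Y w > c * real m then Y w else 0) \<longlonglongrightarrow> 0"
        by (intro tendsto_eventually) (unfold eventually_sequentially, blast)
    qed
    show "\<And>i. AE w in M. norm (if Y w > c * real i then Y w else 0) \<le> norm (Y w)"
      by auto
  qed auto
  then show ?thesis by simp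
qed



lemma (in prob_space) indep_prod:
  fixes Y :: "nat \<Rightarrow> 'a \<Rightarrow> real"
  assumes meas: "\<And>n. n \<ge> 1 \<Longrightarrow> Y n \<in> borel_measurable M"
    and indep: "indep_vars (\<lambda>_. borel) Y {1..}"
    and ident: "\<And>n. n \<ge> 1 \<Longrightarrow> distr M borel (Y n) = distr M borel (Y 1)"
    and J: "J \<in> sets borel" and B: "B \<in> sets borel"
  shows "prob {w\<in>space M. partial_sum Y n w \<in> J \<and> Y (Suc n) w \<in> B}
       = prob {w\<in>space M. partial_sum Y n w \<in> J} * prob {w\<in>space M. Y 1 w \<in> B}"
proof -
  have Tm[measurable]: "partial_sum Y n \<in> borel_measurable M" for n
    by (rule partial_sum_meas) (rule meas)
  have Ym[measurable]: "Y (Suc n) \<in> borel_measurable M" for n using meas by simp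
  have Y1m[measurable]: "Y 1 \<in> borel_measurable M" using meas by simp
  have "prob ((\<lambda>w. (Y (Suc n) w, partial_sum Y n w)) -` (B \<times> J) \<inter> space M) =
      prob (Y (Suc n) -` B \<inter> space M) * prob (partial_sum Y n -` J \<inter> space M)"
    by (rule indep_varD[OF indep_ps[OF indep]]) (auto simp: J B)
  moreover have "prob (Y (Suc n) -` B \<inter> space M) = prob {w\<in>space M. Y 1 w \<in> B}"
    using same_prob[OF ident[of "Suc n"] Ym Y1m B]
    by (simp add: vimage_def Int_def conj_commute)
  moreover have "(\<lambda>w. (Y (Suc n) w, partial_sum Y n w)) -` (B \<times> J) \<inter> space M
      = {w\<in>space M. partial_sum Y n w \<in> J \<and> Y (Suc n) w \<in> B}" by auto
  moreover have "partial_sum Y n -` J \<inter> space M = {w\<in>space M. partial_sum Y n w \<in> J}" by auto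
  ultimately show ?thesis by (simp add: mult.commute)
qed

lemma (in prob_space) age_set_bound:
  fixes Y :: "nat \<Rightarrow> 'a \<Rightarrow> real"
  assumes meas: "\<And>n. n \<ge> 1 \<Longrightarrow> Y n \<in> borel_measurable M"
    and indep: "indep_vars (\<lambda>_. borel) Y {1..}"
    and ident: "\<And>n. n \<ge> 1 \<Longrightarrow> distr M borel (Y n) = distr M borel (Y 1)"
    and nonneg: "\<And>n. n \<ge> 1 \<Longrightarrow> AE w in M. Y n w \<ge> 0"
    and Yi: "integrable M (Y 1)"
    and h: "h > 0" and r1: "prob {w\<in>space M. Y 1 w \<le> h} < 1"
    and a: "a \<ge> 1"
  shows "prob (\<Union>n. \<Union>k\<in>{..<K}. {w\<in>space M.
            partial_sum Y n w \<in> {t - a - real (Suc k) * h <.. t - a - real (Suc k) * h + h}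
            \<and> Y (Suc n) w > a + real k * h})
     \<le> 1 / (1 - prob {w\<in>space M. Y 1 w \<le> h}) * ((1/h + 1) * expectation (\<lambda>w. if Y 1 w > a then Y 1 w else 0))"
proof -
  define r where "r = prob {w\<in>space M. Y 1 w \<le> h}"
  define J where "J k = {t - a - real (Suc k) * h <.. t - a - real (Suc k) * h + h}" for k
  define p where "p k = prob {w\<in>space M. Y 1 w > a + real k * h}" for k
  define F where "F n k = {w\<in>space M. partial_sum Y n w \<in> J k \<and> Y (Suc n) w > a + real k * h}" for n k
  define A where "A n = (\<Union>k\<in>{..<K}. F n k)" for n
  define L where "L = 1 / (1 - r) * ((1/h + 1) * expectation (\<lambda>w. if Y 1 w > a then Y 1 w else 0))"
  have Tm[measurable]: "partial_sum Y n \<in> borel_measurable M" for n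
    by (rule partial_sum_meas) (rule meas)
  have Ym[measurable]: "Y (Suc n) \<in> borel_measurable M" for n using meas by simp
  have Y1m[measurable]: "Y 1 \<in> borel_measurable M" using meas by simp
  have Fm[measurable]: "F n k \<in> sets M" for n k unfolding F_def J_def by measurable
  have Am[measurable]: "A n \<in> sets M" for n unfolding A_def by measurable
  have Fp: "prob (F n k) = prob {w\<in>space M. partial_sum Y n w \<in> J k} * p k" for n k
    unfolding F_def p_def
    using indep_prod[OF meas indep ident, of "J k" "{a + real k * h<..}" n] by (simp add: J_def)
  have r1': "1 - r > 0" using r1 unfolding r_def by simp
  have ren: "(\<Sum>n<N. prob {w\<in>space M. partial_sum Y n w \<in> J k}) \<le> 1 / (1 - r)" for N k
    unfolding J_def r_def by (rule renewal_bound[OF meas indep ident nonneg r1])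
  have p0: "p k \<ge> 0" for k unfolding p_def by simp
  have partial: "(\<Sum>n<N. prob (A n)) \<le> L" for N
  proof -
    have "(\<Sum>n<N. prob (A n)) \<le> (\<Sum>n<N. \<Sum>k<K. prob (F n k))"
      unfolding A_def by (intro sum_mono measure_UNION_le) auto
    also have "\<dots> = (\<Sum>k<K. p k * (\<Sum>n<N. prob {w\<in>space M. partial_sum Y n w \<in> J k}))"
      by (subst sum.swap) (simp add: Fp sum_distrib_left mult.commute)
    also have "\<dots> \<le> (\<Sum>k<K. p k * (1 / (1 - r)))"
      by (intro sum_mono mult_left_mono ren p0)
    also have "\<dots> = 1 / (1 - r) * (\<Sum>k<K. p k)"
      by (simp add: sum_distrib_left mult.commute sum_divide_distrib)
    also have "\<dots> \<le> L"
      unfolding L_def p_def using r1'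
      by (intro mult_left_mono ksum_bound[OF Y1m Yi h a]) auto
    finally show ?thesis .
  qed
  have summ: "summable (\<lambda>n. prob (A n))"
    by (rule bounded_imp_summable[where B=L]) (use partial[of "Suc _"] in \<open>simp_all add: lessThan_Suc_atMost[symmetric] del: sum.lessThan_Suc\<close>)
  have "prob (\<Union>n. A n) \<le> (\<Sum>n. prob (A n))"
    by (rule finite_measure_subadditive_countably[OF _ summ]) auto
  also have "\<dots> \<le> L" by (rule suminf_le_const[OF summ partial])
  finally show ?thesis unfolding A_def F_def J_def L_def r_def by simp
qed



lemma lower_count_big:
  assumes nn: "\<And>j. j \<ge> 1 \<Longrightarrow> C j w \<ge> 0" and big: "lower_count C s w > m"
  shows "partial_sum C m w \<le> s"
proof -
  define S where "S = {n. partial_sum C n w \<le> s}"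
  have B: "lower_count C s w = Sup S" unfolding lower_count_def S_def by simp
  have "\<exists>n\<ge>m. n \<in> S"
  proof (cases "finite S")
    case True
    have "S \<noteq> {}" using big B by (auto simp: Sup_nat_def)
    then have "Max S \<in> S" "Sup S = Max S" using True by (auto simp: Sup_nat_def)
    then show ?thesis using big B by (intro exI[of _ "Max S"]) auto
  next
    case False
    then show ?thesis unfolding finite_nat_set_iff_bounded_le by (meson nat_le_linear)
  qed
  then obtain n where "n \<ge> m" "partial_sum C n w \<le> s" unfolding S_def by auto
  moreover have "partial_sum C m w \<le> partial_sum C n w" by (rule partial_sum_mono[of C w, OF nn \<open>n \<ge> m\<close>])
  ultimately show ?thesis by simp
qed

lemma age_witness:
  fixes X :: "nat \<Rightarrow> 'a \<Rightarrow> real"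
  assumes nn: "\<And>j. j \<ge> 1 \<Longrightarrow> X j w \<ge> 0" and t: "t \<ge> 0"
    and notH: "\<exists>j. partial_sum X j w > t" and age: "renewal_age X t w > a" and a: "a \<ge> 0"
    and h: "h > 0"
  shows "\<exists>n k. k < nat \<lfloor>t / h\<rfloor> + 1 \<and>
      partial_sum X n w \<in> {t - a - real (Suc k) * h <.. t - a - real (Suc k) * h + h} \<and>
      X (Suc n) w > a + real k * h"
proof -
  define T where "T j = partial_sum X j w" for j
  have mono: "i \<le> j \<Longrightarrow> T i \<le> T j" for i j unfolding T_def by (rule partial_sum_mono[of X w, OF nn])
  have T0: "T 0 = 0" unfolding T_def by simp
  have Tnn: "T j \<ge> 0" for j using mono[of 0 j] T0 by simp
  define n0 where "n0 = (LEAST j. T j > t)"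
  have n0: "T n0 > t" unfolding n0_def using notH unfolding T_def by (metis (mono_tags, lifting) LeastI_ex)
  have below: "j < n0 \<Longrightarrow> T j \<le> t" for j unfolding n0_def using not_less_Least by fastforce
  have n0pos: "n0 \<ge> 1" using n0 T0 t by (cases n0) auto
  have a1: "j < n0" if "partial_sum X j w \<le> t" for j
    using mono[of n0 j] n0 that unfolding T_def by (meson linorder_not_le order.trans less_le_not_le)
  have a2: "partial_sum X j w \<le> t" if "j < n0" for j using below[OF that] unfolding T_def .
  have Seq: "{j. 1 \<le> j \<and> partial_sum X j w \<le> t} = {1..<n0}"
    using a1 a2 by auto
  define N where "N = n0 - 1"
  have RC: "renewal_count X t w = N" unfolding renewal_count_def Seq N_def by simp
  have TN: "T N \<le> t" using below[of N] n0pos unfolding N_def by simp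
  have TSN: "T (Suc N) > t" using n0 n0pos unfolding N_def by simp
  have ageN: "renewal_age X t w = t - T N" unfolding renewal_age_def RC T_def by simp
  have lt: "T N < t - a" using age ageN by simp
  define k where "k = nat \<lfloor>(t - a - T N) / h\<rfloor>"
  have q: "(t - a - T N) / h > 0" using lt h by simp
  have kfl: "real k = of_int \<lfloor>(t - a - T N) / h\<rfloor>" unfolding k_def using q by simp
  have k1: "real k \<le> (t - a - T N) / h" using kfl by linarith
  have k2: "(t - a - T N) / h < real k + 1" using kfl by linarith
  have k1': "real k * h \<le> t - a - T N" using k1 h by (simp add: field_simps)
  have k2': "t - a - T N < (real k + 1) * h" using k2 h by (simp add: field_simps)
  have "T N \<in> {t - a - real (Suc k) * h <.. t - a - real (Suc k) * h + h}"
    using k1' k2' by (auto simp: algebra_simps)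
  moreover have "X (Suc N) w > a + real k * h"
    using TSN k1' unfolding T_def partial_sum_Suc by simp
  moreover have "k < nat \<lfloor>t / h\<rfloor> + 1"
  proof -
    have "(t - a - T N) / h \<le> t / h" using h a Tnn[of N] by (simp add: divide_right_mono)
    then have "real k \<le> t / h" using k1 by linarith
    then have "int k \<le> \<lfloor>t / h\<rfloor>" by (metis floor_mono floor_of_nat)
    then show ?thesis by linarith
  qed
  ultimately show ?thesis unfolding T_def by blast
qed



theorem mainTheorem2:
  fixes M :: "'a measure" and X C :: "nat \<Rightarrow> 'a \<Rightarrow> real"
  assumes "prob_space M"
    and X_rv: "\<And>n. n \<ge> 1 \<Longrightarrow> X n \<in> borel_measurable M"
    and X_indep: "prob_space.indep_vars M (\<lambda>_. borel) X {1..}"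
    and X_id: "\<And>n. n \<ge> 1 \<Longrightarrow> distr M borel (X n) = distr M borel (X 1)"
    and X_nonneg: "\<And>n. n \<ge> 1 \<Longrightarrow> AE \<omega> in M. X n \<omega> \<ge> 0"
    and X_nondeg: "measure M {\<omega> \<in> space M. X 1 \<omega> = 0} < 1"
    and X_int: "integrable M (X 1)"
    and C_rv: "\<And>n. n \<ge> 1 \<Longrightarrow> C n \<in> borel_measurable M"
    and C_indep: "prob_space.indep_vars M (\<lambda>_. borel) C {1..}"
    and C_id: "\<And>n. n \<ge> 1 \<Longrightarrow> distr M borel (C n) = distr M borel (C 1)"
    and C_pos: "measure M {\<omega> \<in> space M. C 1 \<omega> > 0} = 1"
    and C_sq: "integrable M (\<lambda>\<omega>. (C 1 \<omega>)\<^sup>2)"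
  shows "\<forall>\<epsilon>>0. ((\<lambda>t. measure M {\<omega> \<in> space M.
            \<bar>real (lower_count C (renewal_age X t \<omega>) \<omega>) / sqrt t\<bar> > \<epsilon>}) \<longlongrightarrow> 0) at_top"
proof -
  interpret prob_space M by fact
  have Xm[measurable]: "X (Suc n) \<in> borel_measurable M" for n using X_rv by simp
  have X1m[measurable]: "X 1 \<in> borel_measurable M" using X_rv by simp
  have Cm[measurable]: "C (Suc n) \<in> borel_measurable M" for n using C_rv by simp
  have C1m[measurable]: "C 1 \<in> borel_measurable M" using C_rv by simp
  have Tm[measurable]: "partial_sum X n \<in> borel_measurable M" for n
    by (rule partial_sum_meas) (rule X_rv)
  have Dm[measurable]: "partial_sum C n \<in> borel_measurable M" for n
    by (rule partial_sum_meas) (rule C_rv)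
  have C_nonneg: "AE w in M. C n w \<ge> 0" if n1: "n \<ge> 1" for n
  proof -
    have "prob {w\<in>space M. C n w \<in> {0<..}} = prob {w\<in>space M. C 1 w \<in> {0<..}}"
      by (rule same_prob[OF C_id[OF n1] C_rv[OF n1] C1m]) simp
    then have "prob {w\<in>space M. C n w > 0} = 1" using C_pos by simp
    then have "AE w in M. w \<in> {w\<in>space M. C n w > 0}" by (rule AE_prob_1)
    then show ?thesis by (auto elim!: eventually_mono)
  qed
  have X1pos: "prob {w\<in>space M. X 1 w > 0} > 0"
  proof -
    have "AE w in M. w \<in> {w\<in>space M. X 1 w \<ge> 0}" using X_nonneg[of 1] by (auto elim!: eventually_mono)
    then have "prob {w\<in>space M. X 1 w \<ge> 0} = 1" by (subst prob_eq_1) auto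
    moreover have "{w\<in>space M. X 1 w \<ge> 0} = {w\<in>space M. X 1 w > 0} \<union> {w\<in>space M. X 1 w = 0}" by auto
    moreover have "prob ({w\<in>space M. X 1 w > 0} \<union> {w\<in>space M. X 1 w = 0}) =
        prob {w\<in>space M. X 1 w > 0} + prob {w\<in>space M. X 1 w = 0}"
      by (rule finite_measure_Union) auto
    ultimately show ?thesis using X_nondeg by simp
  qed
  obtain h where h: "h > 0" "prob {w\<in>space M. X 1 w > h} > 0" using pos_level[OF X1m X1pos] by auto
  define r where "r = prob {w\<in>space M. X 1 w \<le> h}"
  have r1: "r < 1"
  proof -
    have "space M - {w\<in>space M. X 1 w > h} = {w\<in>space M. X 1 w \<le> h}" by auto
    then have "r = 1 - prob {w\<in>space M. X 1 w > h}" unfolding r_def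
      using prob_compl[of "{w\<in>space M. X 1 w > h}"] by simp
    then show ?thesis using h by simp
  qed
  define qX where "qX = expectation (\<lambda>w. exp (- X 1 w))"
  have qX1: "qX < 1" unfolding qX_def by (rule exp_moment_lt1[OF X1m X_nonneg[of 1] X1pos]) simp
  have qX0: "qX \<ge> 0" unfolding qX_def by simp
  define qC where "qC = expectation (\<lambda>w. exp (- C 1 w))"
  have C1pos: "prob {w\<in>space M. C 1 w > 0} > 0" using C_pos by simp
  have qC1: "qC < 1" unfolding qC_def by (rule exp_moment_lt1[OF C1m C_nonneg[of 1] C1pos]) simp
  have qC0: "qC \<ge> 0" unfolding qC_def by simp
  define H where "H t = {w\<in>space M. \<forall>j. partial_sum X j w \<le> t}" for t
  have Hm[measurable]: "H t \<in> sets M" for t unfolding H_def by measurable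
  have H0: "prob (H t) = 0" for t
  proof -
    have le: "prob (H t) \<le> exp t * qX ^ m" for m
    proof -
      have "prob (H t) \<le> prob {w\<in>space M. partial_sum X m w \<le> t}"
        by (rule finite_measure_mono) (auto simp: H_def)
      also have "\<dots> \<le> exp t * qX ^ m" unfolding qX_def
        by (rule exp_bound[OF X_rv X_indep X_id X_nonneg])
      finally show ?thesis .
    qed
    have "(\<lambda>m. exp t * qX ^ m) \<longlonglongrightarrow> exp t * 0"
      by (intro tendsto_mult tendsto_const LIMSEQ_power_zero) (use qX0 qX1 in simp)
    from LIMSEQ_le_const[OF this, of "prob (H t)"] have "prob (H t) \<le> 0" using le by auto
    then show ?thesis using measure_nonneg[of M "H t"] by linarith
  qed
  define G where "G = {w\<in>space M. \<forall>j. j \<ge> 1 \<longrightarrow> X j w \<ge> 0 \<and> C j w \<ge> 0}"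
  have Gm[measurable]: "G \<in> sets M"
  proof -
    have "G = space M \<inter> (\<Inter>j\<in>{1..}. {w\<in>space M. X j w \<ge> 0 \<and> C j w \<ge> 0})" unfolding G_def by auto
    also have "\<dots> \<in> sets M" using X_rv C_rv by (intro sets.Int sets.countable_INT') auto
    finally show ?thesis .
  qed
  have G1: "prob (space M - G) = 0"
  proof -
    have AX: "AE w in M. \<forall>j. j \<ge> 1 \<longrightarrow> X j w \<ge> 0" by (rule AE_all_nonneg) (rule X_nonneg)
    have AC: "AE w in M. \<forall>j. j \<ge> 1 \<longrightarrow> C j w \<ge> 0" by (rule AE_all_nonneg) (rule C_nonneg)
    have "AE w in M. w \<in> G"
      using AX AC AE_space unfolding G_def by eventually_elim auto
    then have "prob G = 1" by (subst prob_eq_1) auto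
    then show ?thesis by (simp add: prob_compl)
  qed
  define c0 where "c0 = ln (2 / (1 + qC))"
  have ec0: "exp c0 = 2 / (1 + qC)" unfolding c0_def using qC0 by simp
  have c0pos: "c0 > 0" unfolding c0_def using qC0 qC1 by simp
  define \<rho> where "\<rho> = exp c0 * qC"
  have \<rho>1: "\<rho> < 1" unfolding \<rho>_def ec0 using qC0 qC1 by (simp add: field_simps)
  have \<rho>0: "\<rho> \<ge> 0" unfolding \<rho>_def using qC0 by simp
  have Dbound: "prob {w\<in>space M. partial_sum C m w \<le> c0 * real m} \<le> \<rho> ^ m" for m
  proof -
    have "prob {w\<in>space M. partial_sum C m w \<le> c0 * real m} \<le> exp (c0 * real m) * qC ^ m"
      unfolding qC_def by (rule exp_bound[OF C_rv C_indep C_id C_nonneg])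
    also have "\<dots> = \<rho> ^ m" unfolding \<rho>_def
      by (simp add: power_mult_distrib mult.commute[of c0] exp_of_nat_mult)
    finally show ?thesis .
  qed
  define Age where "Age t a = (\<Union>n. \<Union>k\<in>{..<nat \<lfloor>t / h\<rfloor> + 1}. {w\<in>space M.
            partial_sum X n w \<in> {t - a - real (Suc k) * h <.. t - a - real (Suc k) * h + h}
            \<and> X (Suc n) w > a + real k * h})" for t a
  have Agem[measurable]: "Age t a \<in> sets M" for t a unfolding Age_def by measurable
  define tail where "tail a = expectation (\<lambda>w. if X 1 w > a then X 1 w else 0)" for a
  define L where "L a = 1 / (1 - r) * ((1/h + 1) * tail a)" for a
  have Agebound: "prob (Age t a) \<le> L a" if "a \<ge> 1" for t a
    unfolding Age_def L_def tail_def r_def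
    by (rule age_set_bound[OF X_rv X_indep X_id X_nonneg X_int h(1) r1[unfolded r_def] that])
  define m where "m \<epsilon> t = nat \<lfloor>\<epsilon> * sqrt t\<rfloor>" for \<epsilon> t :: real
  show ?thesis
  proof (intro allI impI)
    fix \<epsilon> :: real assume eps: "\<epsilon> > 0"
    define E where "E t = {\<omega> \<in> space M. \<bar>real (lower_count C (renewal_age X t \<omega>) \<omega>) / sqrt t\<bar> > \<epsilon>}" for t
    have incl: "E t \<subseteq> (space M - G) \<union> H t \<union> Age t (c0 * real (m \<epsilon> t))
                   \<union> {w\<in>space M. partial_sum C (m \<epsilon> t) w \<le> c0 * real (m \<epsilon> t)}"
      if t: "t > 0" and big: "c0 * real (m \<epsilon> t) \<ge> 1" for t
    proof
      fix w assume wE: "w \<in> E t"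
      show "w \<in> (space M - G) \<union> H t \<union> Age t (c0 * real (m \<epsilon> t))
                   \<union> {w\<in>space M. partial_sum C (m \<epsilon> t) w \<le> c0 * real (m \<epsilon> t)}"
      proof (cases "w \<in> G \<and> w \<notin> H t")
        case False then show ?thesis using wE unfolding E_def by auto
      next
        case True
        have ws: "w \<in> space M" using wE unfolding E_def by auto
        have nnX: "\<And>j. j \<ge> 1 \<Longrightarrow> X j w \<ge> 0" and nnC: "\<And>j. j \<ge> 1 \<Longrightarrow> C j w \<ge> 0"
          using True unfolding G_def by auto
        define B where "B = lower_count C (renewal_age X t w) w"
        have st: "sqrt t > 0" using t by simp
        have "real B / sqrt t > \<epsilon>" using wE st unfolding E_def B_def by auto
        then have "real B > \<epsilon> * sqrt t" using st by (simp add: field_simps)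
        moreover have "real (m \<epsilon> t) \<le> \<epsilon> * sqrt t"
          unfolding m_def using eps st by (simp add: mult_nonneg_nonneg)
        ultimately have "B > m \<epsilon> t" by linarith
        then have Dle: "partial_sum C (m \<epsilon> t) w \<le> renewal_age X t w"
          using lower_count_big[where C=C and w=w and s="renewal_age X t w" and m="m \<epsilon> t"] nnC unfolding B_def by blast
        show ?thesis
        proof (cases "renewal_age X t w > c0 * real (m \<epsilon> t)")
          case False then show ?thesis using Dle ws by auto
        next
          case True
          have notH: "\<exists>j. partial_sum X j w > t" using \<open>w \<in> G \<and> w \<notin> H t\<close> ws unfolding H_def by (auto simp: not_le)
          obtain n k where "k < nat \<lfloor>t / h\<rfloor> + 1"
            "partial_sum X n w \<in> {t - c0 * real (m \<epsilon> t) - real (Suc k) * h <..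
                t - c0 * real (m \<epsilon> t) - real (Suc k) * h + h}"
            "X (Suc n) w > c0 * real (m \<epsilon> t) + real k * h"
            using age_witness[of X w, OF nnX _ notH True _ h(1)] t big by auto
          then have "w \<in> Age t (c0 * real (m \<epsilon> t))" unfolding Age_def using ws by blast
          then show ?thesis by blast
        qed
      qed
    qed
    have bound: "measure M (E t) \<le> L (c0 * real (m \<epsilon> t)) + \<rho> ^ (m \<epsilon> t)"
      if t: "t > 0" and big: "c0 * real (m \<epsilon> t) \<ge> 1" for t
    proof -
      have "measure M (E t) \<le> prob ((space M - G) \<union> H t \<union> Age t (c0 * real (m \<epsilon> t))
                   \<union> {w\<in>space M. partial_sum C (m \<epsilon> t) w \<le> c0 * real (m \<epsilon> t)})"
        by (rule finite_measure_mono[OF incl[OF t big]]) measurable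
      also have "\<dots> \<le> prob (space M - G) + prob (H t) + prob (Age t (c0 * real (m \<epsilon> t)))
                   + prob {w\<in>space M. partial_sum C (m \<epsilon> t) w \<le> c0 * real (m \<epsilon> t)}"
        by (intro order.trans[OF measure_Un_le] add_mono order.refl) auto
      also have "\<dots> \<le> 0 + 0 + L (c0 * real (m \<epsilon> t)) + \<rho> ^ (m \<epsilon> t)"
        using G1 H0 Agebound[OF big] Dbound by (intro add_mono) auto
      finally show ?thesis by simp
    qed
    have mlim: "filterlim (m \<epsilon>) at_top at_top"
    proof -
      have "filterlim (\<lambda>t. \<epsilon> * sqrt t) at_top at_top"
        by (rule filterlim_tendsto_pos_mult_at_top[OF tendsto_const eps sqrt_at_top])
      then have "filterlim (\<lambda>t. \<lfloor>\<epsilon> * sqrt t\<rfloor>) at_top at_top"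
        by (rule filterlim_compose[OF filterlim_floor_sequentially])
      then show ?thesis unfolding m_def[abs_def]
        by (rule filterlim_compose[OF filterlim_nat_sequentially])
    qed
    have flim: "(\<lambda>n. L (c0 * real n) + \<rho> ^ n) \<longlonglongrightarrow> 0"
    proof -
      have "(\<lambda>n. tail (c0 * real n)) \<longlonglongrightarrow> 0"
        unfolding tail_def by (rule tail_tendsto[OF X1m X_int c0pos])
      then have "(\<lambda>n. L (c0 * real n)) \<longlonglongrightarrow> 1 / (1 - r) * ((1/h + 1) * 0)"
        unfolding L_def by (intro tendsto_mult tendsto_const)
      moreover have "(\<lambda>n. \<rho> ^ n) \<longlonglongrightarrow> 0" using \<rho>0 \<rho>1 by (intro LIMSEQ_power_zero) simp
      ultimately show ?thesis using tendsto_add by fastforce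
    qed
    have comp: "((\<lambda>t. L (c0 * real (m \<epsilon> t)) + \<rho> ^ (m \<epsilon> t)) \<longlongrightarrow> 0) at_top"
      using filterlim_compose[OF flim mlim] by (simp add: o_def)
    have ev: "eventually (\<lambda>t. measure M (E t) \<le> L (c0 * real (m \<epsilon> t)) + \<rho> ^ (m \<epsilon> t)) at_top"
    proof -
      have "eventually (\<lambda>t. m \<epsilon> t \<ge> nat \<lceil>1 / c0\<rceil>) at_top"
        using mlim[unfolded filterlim_at_top] by blast
      moreover have "eventually (\<lambda>t::real. t > 0) at_top" by (rule eventually_gt_at_top)
      ultimately show ?thesis
      proof eventually_elim
        case (elim t)
        have "real (m \<epsilon> t) \<ge> 1 / c0" using elim(1) by linarith
        then have "c0 * real (m \<epsilon> t) \<ge> 1" using c0pos by (simp add: field_simps)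
        then show ?case using bound elim(2) by blast
      qed
    qed
    show "((\<lambda>t. measure M {\<omega> \<in> space M.
            \<bar>real (lower_count C (renewal_age X t \<omega>) \<omega>) / sqrt t\<bar> > \<epsilon>}) \<longlongrightarrow> 0) at_top"
      using tendsto_sandwich[OF _ ev tendsto_const comp] unfolding E_def by simp
  qed
qed

end
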